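(* Let $W\ge0$ be a function on $\mathbb{R}$ with $\log W(x)/|x|\to-\infty$ as $|x|\to\infty$ such that the orthonormal polynomials $p_0,p_1,\dots$ with respect to $W(x)dx$ exist. Let $d\ge\mathbf{m}\ge1$, real $a_1,\dots,a_\mathbf{m}$, measurable $E\subset\mathbb{R}$ and $s\in\mathbb{C}$ be such that $1-sPK_kP$ is invertible on $L^2(\mathbb{R})$ for $k=d-\mathbf{m}+1,\dots,d$. Then $$\det\Big[\big\langle\psi_{d-j},\big(1-sP(1-sPK_dP)^{-1}(1-K_d)\big)\hat{\mathbf{v}}_k\big\rangle\Big]_{j,k=1}^{\mathbf{m}}=\det\Big[\big\langle\psi_{d-j},\big(1-sP(1-sPK_{d-j+1}P)^{-1}(1-K_{d-j+1})\big)\hat{\mathbf{v}}_k\big\rangle\Big]_{j,k=1}^{\mathbf{m}}.$$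
   Context: $\psi_k(x)=p_k(x)W(x)^{1/2}$; for $k\ge1$, $K_k$ is the integral operator with kernel $K_k(x,y)=\sum_{i=0}^{k-1}\psi_i(x)\psi_i(y)$; $P$ is multiplication by $\chi_E$; $\hat{\mathbf{v}}_k(x)=e^{a_kx}W(x)^{1/2}$; $\langle f,g\rangle=\int_{\mathbb{R}}f(x)g(x)dx$. *)

theory Defs
  imports "HOL-Analysis.Analysis" "HOL-Computational_Algebra.Polynomial" "Jordan_Normal_Form.Determinant"
begin

definition L2 :: "(real \<Rightarrow> complex) set" where
  "L2 = {f. f \<in> borel_measurable lebesgue \<and> integrable lebesgue (\<lambda>x. (cmod (f x))^2)}"

text \<open>Bilinear pairing <f,g> = integral of f g (no conjugation), as in the paper.\<close>
definition ip :: "(real \<Rightarrow> complex) \<Rightarrow> (real \<Rightarrow> complex) \<Rightarrow> complex" where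
  "ip f g = (LINT x|lebesgue. f x * g x)"

definition psi :: "(nat \<Rightarrow> real poly) \<Rightarrow> (real \<Rightarrow> real) \<Rightarrow> nat \<Rightarrow> real \<Rightarrow> complex" where
  "psi p W i x = complex_of_real (poly (p i) x * sqrt (W x))"

definition Kop :: "(nat \<Rightarrow> real poly) \<Rightarrow> (real \<Rightarrow> real) \<Rightarrow> nat \<Rightarrow> (real \<Rightarrow> complex) \<Rightarrow> real \<Rightarrow> complex" where
  "Kop p W k f = (\<lambda>x. \<Sum>i<k. psi p W i x * ip (psi p W i) f)"

definition Pop :: "real set \<Rightarrow> (real \<Rightarrow> complex) \<Rightarrow> real \<Rightarrow> complex" where
  "Pop E f = (\<lambda>x. indicator E x * f x)"

definition vhat :: "(real \<Rightarrow> real) \<Rightarrow> real \<Rightarrow> real \<Rightarrow> complex" where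
  "vhat W a = (\<lambda>x. complex_of_real (exp (a * x) * sqrt (W x)))"

definition L2_invertible :: "((real \<Rightarrow> complex) \<Rightarrow> (real \<Rightarrow> complex)) \<Rightarrow> bool" where
  "L2_invertible T \<longleftrightarrow>
     (\<forall>f\<in>L2. T f \<in> L2) \<and>
     (\<forall>g\<in>L2. \<exists>f\<in>L2. AE x in lebesgue. T f x = g x) \<and>
     (\<forall>f\<in>L2. \<forall>h\<in>L2. (AE x in lebesgue. T f x = T h x) \<longrightarrow> (AE x in lebesgue. f x = h x))"

definition L2_inv :: "((real \<Rightarrow> complex) \<Rightarrow> (real \<Rightarrow> complex)) \<Rightarrow> (real \<Rightarrow> complex) \<Rightarrow> real \<Rightarrow> complex" where
  "L2_inv T g = (SOME f. f \<in> L2 \<and> (AE x in lebesgue. T f x = g x))"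

definition Top :: "(nat \<Rightarrow> real poly) \<Rightarrow> (real \<Rightarrow> real) \<Rightarrow> real set \<Rightarrow> complex \<Rightarrow> nat
    \<Rightarrow> (real \<Rightarrow> complex) \<Rightarrow> real \<Rightarrow> complex" where
  "Top p W E s k f = (\<lambda>x. f x - s * Pop E (Kop p W k (Pop E f)) x)"

definition Aop :: "(nat \<Rightarrow> real poly) \<Rightarrow> (real \<Rightarrow> real) \<Rightarrow> real set \<Rightarrow> complex \<Rightarrow> nat
    \<Rightarrow> (real \<Rightarrow> complex) \<Rightarrow> real \<Rightarrow> complex" where
  "Aop p W E s n g = (\<lambda>x. g x - s * Pop E (L2_inv (Top p W E s n) (\<lambda>y. g y - Kop p W n g y)) x)"

end

theory Submission
  imports Defs
begin


lemma L2_lin: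
  assumes "f \<in> L2" "g \<in> L2"
  shows "(\<lambda>x. a * f x + b * g x) \<in> L2"
proof -
  have mf: "f \<in> borel_measurable lebesgue" and mg: "g \<in> borel_measurable lebesgue"
    and if2: "integrable lebesgue (\<lambda>x. (cmod (f x))^2)" and ig2: "integrable lebesgue (\<lambda>x. (cmod (g x))^2)"
    using assms by (auto simp: L2_def)
  have m: "(\<lambda>x. a * f x + b * g x) \<in> borel_measurable lebesgue" using mf mg by measurable
  have I: "integrable lebesgue (\<lambda>x. 2 * (cmod a)^2 * (cmod (f x))^2 + 2 * (cmod b)^2 * (cmod (g x))^2)"
    using if2 ig2 by auto
  have m2: "(\<lambda>x. (cmod (a * f x + b * g x))^2) \<in> borel_measurable lebesgue" using m by measurable
  have bnd: "norm ((cmod (a * f x + b * g x))^2) \<le> norm (2 * (cmod a)^2 * (cmod (f x))^2 + 2 * (cmod b)^2 * (cmod (g x))^2)" for x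
  proof -
    have "cmod (a * f x + b * g x) \<le> cmod a * cmod (f x) + cmod b * cmod (g x)"
      by (metis norm_mult norm_triangle_ineq)
    hence "(cmod (a * f x + b * g x))^2 \<le> (cmod a * cmod (f x) + cmod b * cmod (g x))^2"
      by (simp add: power_mono)
    also have "\<dots> \<le> 2 * (cmod a)^2 * (cmod (f x))^2 + 2 * (cmod b)^2 * (cmod (g x))^2"
    proof -
      have "0 \<le> (cmod a * cmod (f x) - cmod b * cmod (g x))^2" by simp
      thus ?thesis by (simp add: power2_eq_square algebra_simps)
    qed
    finally show ?thesis by simp
  qed
  have bnd': "(cmod (a * f x + b * g x))^2 \<le> 2 * (cmod a)^2 * (cmod (f x))^2 + 2 * (cmod b)^2 * (cmod (g x))^2" for x
    using bnd[of x] by simp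
  have "integrable lebesgue (\<lambda>x. (cmod (a * f x + b * g x))^2)"
    by (rule Bochner_Integration.integrable_bound[OF I m2]) (auto intro!: AE_I2 bnd')
  thus ?thesis using m by (simp add: L2_def)
qed

lemma L2_prod:
  assumes "f \<in> L2" "g \<in> L2"
  shows "integrable lebesgue (\<lambda>x. f x * g x)"
proof -
  have mf: "f \<in> borel_measurable lebesgue" and mg: "g \<in> borel_measurable lebesgue"
    and if2: "integrable lebesgue (\<lambda>x. (cmod (f x))^2)" and ig2: "integrable lebesgue (\<lambda>x. (cmod (g x))^2)"
    using assms by (auto simp: L2_def)
  have m: "(\<lambda>x. f x * g x) \<in> borel_measurable lebesgue" using mf mg by measurable
  have I: "integrable lebesgue (\<lambda>x. (cmod (f x))^2 + (cmod (g x))^2)" using if2 ig2 by auto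
  have bnd: "norm (f x * g x) \<le> norm ((cmod (f x))^2 + (cmod (g x))^2)" for x
  proof -
    have "cmod (f x) * cmod (g x) \<le> (cmod (f x))^2 + (cmod (g x))^2"
    proof -
      have "0 \<le> (cmod (f x) - cmod (g x))^2" by simp
      hence "2 * (cmod (f x) * cmod (g x)) \<le> (cmod (f x))^2 + (cmod (g x))^2" by (simp add: power2_eq_square algebra_simps)
      moreover have "0 \<le> cmod (f x) * cmod (g x)" by simp
      ultimately show ?thesis by linarith
    qed
    thus ?thesis by (simp add: norm_mult)
  qed
  have bnd': "cmod (f x * g x) \<le> (cmod (f x))^2 + (cmod (g x))^2" for x
    using bnd[of x] by simp
  show ?thesis
    by (rule Bochner_Integration.integrable_bound[OF I m]) (auto intro!: AE_I2 bnd')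
qed

lemma L2_zero: "(\<lambda>x. 0) \<in> L2" by (simp add: L2_def)

lemma L2_Pop: assumes "f \<in> L2" "E \<in> sets lebesgue" shows "Pop E f \<in> L2"
proof -
  have mf: "f \<in> borel_measurable lebesgue" and if2: "integrable lebesgue (\<lambda>x. (cmod (f x))^2)"
    using assms by (auto simp: L2_def)
  have m: "Pop E f \<in> borel_measurable lebesgue" unfolding Pop_def using mf assms(2) by measurable
  have "norm ((cmod (Pop E f x))^2) \<le> norm ((cmod (f x))^2)" for x
    by (auto simp: Pop_def indicator_def)
  hence "integrable lebesgue (\<lambda>x. (cmod (Pop E f x))^2)"
    by (intro Bochner_Integration.integrable_bound[OF if2]) (use m in auto)
  thus ?thesis using m by (simp add: L2_def)
qed


lemma L2_add: "f \<in> L2 \<Longrightarrow> g \<in> L2 \<Longrightarrow> (\<lambda>x. f x + g x) \<in> L2"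
  using L2_lin[of f g 1 1] by simp
lemma L2_diff: "f \<in> L2 \<Longrightarrow> g \<in> L2 \<Longrightarrow> (\<lambda>x. f x - g x) \<in> L2"
  using L2_lin[of f g 1 "-1"] by simp
lemma L2_smult: "f \<in> L2 \<Longrightarrow> (\<lambda>x. c * f x) \<in> L2"
  using L2_lin[of f f c 0] by simp

lemma L2_meas: "f \<in> L2 \<Longrightarrow> f \<in> borel_measurable lebesgue" by (simp add: L2_def)

lemma ip_lin:
  assumes "f \<in> L2" "g \<in> L2" "h \<in> L2"
  shows "ip f (\<lambda>x. a * g x + b * h x) = a * ip f g + b * ip f h"
proof -
  have i1: "integrable lebesgue (\<lambda>x. f x * g x)" and i2: "integrable lebesgue (\<lambda>x. f x * h x)"
    using L2_prod assms by auto
  have "ip f (\<lambda>x. a * g x + b * h x) = (LINT x|lebesgue. a * (f x * g x) + b * (f x * h x))"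
    unfolding ip_def by (simp add: algebra_simps)
  also have "\<dots> = (LINT x|lebesgue. a * (f x * g x)) + (LINT x|lebesgue. b * (f x * h x))"
    using i1 i2 by (intro Bochner_Integration.integral_add) auto
  also have "\<dots> = a * ip f g + b * ip f h" unfolding ip_def by simp
  finally show ?thesis .
qed

lemma ip_AE:
  assumes "f \<in> L2" "g \<in> L2" "h \<in> L2" "AE x in lebesgue. g x = h x"
  shows "ip f g = ip f h"
proof -
  have i1: "integrable lebesgue (\<lambda>x. f x * g x)" and i2: "integrable lebesgue (\<lambda>x. f x * h x)"
    using L2_prod assms by auto
  show ?thesis unfolding ip_def
    by (rule integral_cong_AE) (use i1 i2 assms(4) in auto)
qed

lemma ip_zero: "ip f (\<lambda>x. 0) = 0" by (simp add: ip_def)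

lemma Pop_lin: "Pop E (\<lambda>x. a * g x + b * h x) = (\<lambda>x. a * Pop E g x + b * Pop E h x)"
  by (auto simp: Pop_def fun_eq_iff algebra_simps)

lemma Kop_Suc: "Kop p W (Suc k) f x = Kop p W k f x + psi p W k x * ip (psi p W k) f"
  by (simp add: Kop_def)

lemma Kop_zero: "Kop p W k (\<lambda>x. 0) = (\<lambda>x. 0)"
  by (simp add: Kop_def ip_zero fun_eq_iff)

lemma inv_props:
  assumes "L2_invertible T" "g \<in> L2"
  shows "L2_inv T g \<in> L2" "AE x in lebesgue. T (L2_inv T g) x = g x"
proof -
  have "\<exists>f. f \<in> L2 \<and> (AE x in lebesgue. T f x = g x)" using assms by (auto simp: L2_invertible_def)
  hence "L2_inv T g \<in> L2 \<and> (AE x in lebesgue. T (L2_inv T g) x = g x)"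
    unfolding L2_inv_def by (rule someI_ex)
  thus "L2_inv T g \<in> L2" "AE x in lebesgue. T (L2_inv T g) x = g x" by auto
qed

lemma inv_inj:
  assumes "L2_invertible T" "f \<in> L2" "h \<in> L2" "AE x in lebesgue. T f x = T h x"
  shows "AE x in lebesgue. f x = h x"
  using assms by (auto simp: L2_invertible_def)

locale ctx =
  fixes p :: "nat \<Rightarrow> real poly" and W :: "real \<Rightarrow> real" and E :: "real set" and s :: complex
  assumes psiL2: "\<And>i. psi p W i \<in> L2" and Em: "E \<in> sets lebesgue"
begin

lemma Kop_L2: "f \<in> L2 \<Longrightarrow> Kop p W k f \<in> L2"
proof (induction k)
  case 0
  then show ?case by (simp add: Kop_def L2_zero)
next
  case (Suc k)
  have "Kop p W (Suc k) f = (\<lambda>x. Kop p W k f x + ip (psi p W k) f * psi p W k x)"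
    by (auto simp: Kop_Suc fun_eq_iff mult.commute)
  then show ?case using Suc psiL2 by (auto intro!: L2_add L2_smult)
qed

lemma Kop_lin:
  assumes "g \<in> L2" "h \<in> L2"
  shows "Kop p W k (\<lambda>x. a * g x + b * h x) x = a * Kop p W k g x + b * Kop p W k h x"
  unfolding Kop_def using assms psiL2
  by (simp add: ip_lin sum_distrib_left sum.distrib algebra_simps)

lemma Pop_L2: "f \<in> L2 \<Longrightarrow> Pop E f \<in> L2" using L2_Pop Em by blast

lemma Top_L2: "f \<in> L2 \<Longrightarrow> Top p W E s k f \<in> L2"
  unfolding Top_def by (intro L2_diff L2_smult Pop_L2 Kop_L2)

lemma Top_lin:
  assumes "g \<in> L2" "h \<in> L2"
  shows "Top p W E s k (\<lambda>x. a * g x + b * h x) x = a * Top p W E s k g x + b * Top p W E s k h x"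
proof -
  have "Kop p W k (Pop E (\<lambda>x. a * g x + b * h x)) x = a * Kop p W k (Pop E g) x + b * Kop p W k (Pop E h) x" for x
    unfolding Pop_lin using assms by (intro Kop_lin Pop_L2)
  thus ?thesis unfolding Top_def by (simp add: Pop_def algebra_simps)
qed

lemma Aop_L2:
  assumes "L2_invertible (Top p W E s n)" "g \<in> L2"
  shows "Aop p W E s n g \<in> L2"
proof -
  have "(\<lambda>y. g y - Kop p W n g y) \<in> L2" using assms by (intro L2_diff Kop_L2)
  hence "L2_inv (Top p W E s n) (\<lambda>y. g y - Kop p W n g y) \<in> L2" using inv_props assms by blast
  thus ?thesis unfolding Aop_def using assms by (intro L2_diff L2_smult Pop_L2)
qed


lemma key:
  assumes iT: "L2_invertible (Top p W E s k)" and iT1: "L2_invertible (Top p W E s (Suc k))"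
    and g: "g \<in> L2"
  shows "AE x in lebesgue. Aop p W E s (Suc k) g x = Aop p W E s k g x
     + s * Pop E (L2_inv (Top p W E s k) (Pop E (psi p W k))) x * ip (psi p W k) (Aop p W E s (Suc k) g)"
proof -
  define u where "u j = (\<lambda>y. g y - Kop p W j g y)" for j
  have uL2: "u j \<in> L2" for j unfolding u_def using g by (intro L2_diff Kop_L2)
  define f where "f = L2_inv (Top p W E s (Suc k)) (u (Suc k))"
  define f' where "f' = L2_inv (Top p W E s k) (u k)"
  define e where "e = L2_inv (Top p W E s k) (Pop E (psi p W k))"
  have fL2: "f \<in> L2" and fAE: "AE x in lebesgue. Top p W E s (Suc k) f x = u (Suc k) x"
    unfolding f_def using inv_props[OF iT1 uL2] by auto
  have f'L2: "f' \<in> L2" and f'AE: "AE x in lebesgue. Top p W E s k f' x = u k x"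
    unfolding f'_def using inv_props[OF iT uL2] by auto
  have eL2: "e \<in> L2" and eAE: "AE x in lebesgue. Top p W E s k e x = Pop E (psi p W k) x"
    unfolding e_def using inv_props[OF iT Pop_L2[OF psiL2]] by auto
  have A1: "Aop p W E s (Suc k) g = (\<lambda>x. g x - s * Pop E f x)"
    unfolding Aop_def f_def u_def by simp
  have A0: "Aop p W E s k g = (\<lambda>x. g x - s * Pop E f' x)"
    unfolding Aop_def f'_def u_def by simp
  define b where "b = ip (psi p W k) g"
  define c where "c = ip (psi p W k) (Aop p W E s (Suc k) g)"
  have c_eq: "c = b - s * ip (psi p W k) (Pop E f)"
  proof -
    have "c = ip (psi p W k) (\<lambda>x. 1 * g x + (-s) * Pop E f x)" unfolding c_def A1 by simp
    also have "\<dots> = b - s * ip (psi p W k) (Pop E f)"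
      using psiL2 g Pop_L2[OF fL2] by (subst ip_lin) (auto simp: b_def)
    finally show ?thesis .
  qed
  define q where "q = (\<lambda>x. psi p W k x - Pop E (psi p W k) x)"
  have qL2: "q \<in> L2" unfolding q_def using psiL2 by (intro L2_diff Pop_L2)
  have Pq: "Pop E q = (\<lambda>x. 0)" by (auto simp: Pop_def q_def indicator_def fun_eq_iff)
  have Tq: "Top p W E s k q x = q x" for x unfolding Top_def Pq Kop_zero by (simp add: Pop_def)
  define F1 where "F1 = (\<lambda>x. 1 * f' x + (-c) * e x)"
  define F where "F = (\<lambda>x. 1 * F1 x + (-b) * q x)"
  have F1L2: "F1 \<in> L2" unfolding F1_def using f'L2 eL2 by (rule L2_lin)
  have FL2: "F \<in> L2" unfolding F_def using F1L2 qL2 by (rule L2_lin)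
  have TF: "Top p W E s k F x = Top p W E s k f' x - c * Top p W E s k e x - b * q x" for x
  proof -
    have t1: "Top p W E s k F x = 1 * Top p W E s k F1 x + (-b) * Top p W E s k q x"
      unfolding F_def by (rule Top_lin[OF F1L2 qL2])
    have t2: "Top p W E s k F1 x = 1 * Top p W E s k f' x + (-c) * Top p W E s k e x"
      unfolding F1_def by (rule Top_lin[OF f'L2 eL2])
    show ?thesis using t1 t2 Tq[of x] by simp
  qed
  have AE_TF: "AE x in lebesgue. Top p W E s k F x = u k x - c * Pop E (psi p W k) x - b * q x"
    using f'AE eAE by eventually_elim (simp add: TF)
  have Tkf: "Top p W E s k f x = Top p W E s (Suc k) f x + s * Pop E (psi p W k) x * ip (psi p W k) (Pop E f)" for x
    by (simp add: Top_def Kop_Suc Pop_def algebra_simps)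
  have uS: "u (Suc k) x = u k x - psi p W k x * b" for x
    by (simp add: u_def Kop_Suc b_def)
  have "AE x in lebesgue. Top p W E s k f x = Top p W E s k F x"
    using fAE AE_TF
  proof eventually_elim
    case (elim x)
    have "Top p W E s k f x = u k x - psi p W k x * b + s * Pop E (psi p W k) x * ip (psi p W k) (Pop E f)"
      using elim by (simp add: Tkf uS)
    also have "\<dots> = u k x - c * Pop E (psi p W k) x - b * q x"
      by (simp add: c_eq q_def algebra_simps)
    finally show ?case using elim by simp
  qed
  hence fF: "AE x in lebesgue. f x = F x" by (rule inv_inj[OF iT fL2 FL2])
  show ?thesis using fF
  proof eventually_elim
    case (elim x)
    have Pqx: "indicator E x * q x = 0" using fun_cong[OF Pq, of x] by (simp add: Pop_def)
    have "Aop p W E s (Suc k) g x = g x - s * (indicator E x * F x)" by (simp add: A1 Pop_def elim)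
    also have "\<dots> = g x - s * (indicator E x * f' x) + s * (indicator E x * e x) * c + s * b * (indicator E x * q x)"
      by (simp add: F_def F1_def algebra_simps)
    also have "\<dots> = Aop p W E s k g x + s * Pop E e x * c"
      unfolding Pqx by (simp add: A0 Pop_def)
    finally show ?case by (simp add: e_def c_def)
  qed
qed

lemma key_ip:
  assumes iT: "L2_invertible (Top p W E s k)" and iT1: "L2_invertible (Top p W E s (Suc k))"
    and g: "g \<in> L2" and phi: "\<phi> \<in> L2"
  shows "ip \<phi> (Aop p W E s (Suc k) g) = ip \<phi> (Aop p W E s k g)
     + ip \<phi> (\<lambda>x. s * Pop E (L2_inv (Top p W E s k) (Pop E (psi p W k))) x) * ip (psi p W k) (Aop p W E s (Suc k) g)"
proof -
  define h where "h = (\<lambda>x. s * Pop E (L2_inv (Top p W E s k) (Pop E (psi p W k))) x)"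
  define c where "c = ip (psi p W k) (Aop p W E s (Suc k) g)"
  have hL2: "h \<in> L2" unfolding h_def
    using inv_props(1)[OF iT Pop_L2[OF psiL2]] by (intro L2_smult Pop_L2)
  have a0: "Aop p W E s k g \<in> L2" using Aop_L2 iT g by blast
  have a1: "Aop p W E s (Suc k) g \<in> L2" using Aop_L2 iT1 g by blast
  have "AE x in lebesgue. Aop p W E s (Suc k) g x = 1 * Aop p W E s k g x + c * h x"
    using key[OF iT iT1 g] by eventually_elim (simp add: h_def c_def mult.commute mult.left_commute)
  hence "ip \<phi> (Aop p W E s (Suc k) g) = ip \<phi> (\<lambda>x. 1 * Aop p W E s k g x + c * h x)"
    using phi a1 a0 hL2 by (intro ip_AE L2_lin) auto
  also have "\<dots> = ip \<phi> (Aop p W E s k g) + c * ip \<phi> h"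
    using ip_lin[OF phi a0 hL2, of 1 c] by simp
  finally show ?thesis by (simp add: h_def c_def mult.commute)
qed


lemma telescope:
  assumes dm: "d \<ge> m" and inv: "\<forall>k\<in>{d - m + 1..d}. L2_invertible (Top p W E s k)"
    and g: "g \<in> L2" and j: "j < m" and t: "t \<le> j"
  shows "ip (psi p W (d - (j + 1))) (Aop p W E s (d - t) g)
       = ip (psi p W (d - (j + 1))) (Aop p W E s (d - j) g)
         + (\<Sum>i\<in>{t..<j}. ip (psi p W (d - (j + 1)))
              (\<lambda>x. s * Pop E (L2_inv (Top p W E s (d - (i + 1))) (Pop E (psi p W (d - (i + 1))))) x)
            * ip (psi p W (d - (i + 1))) (Aop p W E s (d - (i + 1) + 1) g))"
  using t
proof (induction t rule: inc_induct)
  case base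
  then show ?case by simp
next
  case (step t)
  define k where "k = d - (t + 1)"
  have kS: "Suc k = d - t" and kk: "d - (t + 1) + 1 = Suc k" "d - Suc t = k" using step j dm by (auto simp: k_def)
  have i1: "L2_invertible (Top p W E s k)" using inv step j dm by (auto simp: k_def)
  have mem: "Suc k \<in> {d - m + 1..d}" using step j dm unfolding k_def by auto
  have i2: "L2_invertible (Top p W E s (Suc k))" using inv mem by blast
  have eq: "ip (psi p W (d - (j + 1))) (Aop p W E s (Suc k) g) = ip (psi p W (d - (j + 1))) (Aop p W E s k g)
     + ip (psi p W (d - (j + 1))) (\<lambda>x. s * Pop E (L2_inv (Top p W E s k) (Pop E (psi p W k))) x) * ip (psi p W k) (Aop p W E s (Suc k) g)"
    by (rule key_ip[OF i1 i2 g psiL2])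
  have sm: "{t..<j} = insert t {Suc t..<j}" using step by auto
  show ?case
    unfolding kS[symmetric] eq using step.IH unfolding kk(2) sm
    by (simp add: k_def)
qed

lemma main_det:
  fixes v :: "nat \<Rightarrow> real \<Rightarrow> complex"
  assumes dm: "d \<ge> m" and inv: "\<forall>k\<in>{d - m + 1..d}. L2_invertible (Top p W E s k)"
    and vL2: "\<And>k. v k \<in> L2"
  shows "det (mat m m (\<lambda>(j, k). ip (psi p W (d - (j + 1))) (Aop p W E s d (v k))))
       = det (mat m m (\<lambda>(j, k). ip (psi p W (d - (j + 1))) (Aop p W E s (d - (j + 1) + 1) (v k))))"
proof -
  define R where "R = mat m m (\<lambda>(j, k). ip (psi p W (d - (j + 1))) (Aop p W E s (d - (j + 1) + 1) (v k)))"
  define N where "N = mat m m (\<lambda>(j, i). if i < j then ip (psi p W (d - (j + 1)))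
              (\<lambda>x. s * Pop E (L2_inv (Top p W E s (d - (i + 1))) (Pop E (psi p W (d - (i + 1))))) x) else 0)"
  have Rc: "R \<in> carrier_mat m m" and Nc: "N \<in> carrier_mat m m" unfolding R_def N_def by auto
  have Lrow: "ip (psi p W (d - (j + 1))) (Aop p W E s d (v k)) =
      R $$ (j, k) + (\<Sum>i\<in>{0..<j}. N $$ (j, i) * R $$ (i, k))" if "j < m" "k < m" for j k
  proof -
    have "ip (psi p W (d - (j + 1))) (Aop p W E s (d - 0) (v k)) = ip (psi p W (d - (j + 1))) (Aop p W E s (d - j) (v k))
         + (\<Sum>i\<in>{0..<j}. ip (psi p W (d - (j + 1)))
              (\<lambda>x. s * Pop E (L2_inv (Top p W E s (d - (i + 1))) (Pop E (psi p W (d - (i + 1))))) x)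
            * ip (psi p W (d - (i + 1))) (Aop p W E s (d - (i + 1) + 1) (v k)))"
      by (rule telescope[OF dm inv vL2 that(1)]) simp
    moreover have "d - j = d - (j + 1) + 1" using that dm by simp
    moreover have "(\<Sum>i\<in>{0..<j}. N $$ (j, i) * R $$ (i, k)) = (\<Sum>i\<in>{0..<j}. ip (psi p W (d - (j + 1)))
              (\<lambda>x. s * Pop E (L2_inv (Top p W E s (d - (i + 1))) (Pop E (psi p W (d - (i + 1))))) x)
            * ip (psi p W (d - (i + 1))) (Aop p W E s (d - (i + 1) + 1) (v k)))"
      using that by (intro sum.cong) (auto simp: N_def R_def)
    ultimately show ?thesis using that by (simp add: R_def)
  qed
  have Meq: "mat m m (\<lambda>(j, k). ip (psi p W (d - (j + 1))) (Aop p W E s d (v k))) = (1\<^sub>m m + N) * R"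
  proof (rule eq_matI)
    fix j k assume jk: "j < dim_row ((1\<^sub>m m + N) * R)" "k < dim_col ((1\<^sub>m m + N) * R)"
    hence j: "j < m" and k: "k < m" using Rc Nc by auto
    have "((1\<^sub>m m + N) * R) $$ (j, k) = (\<Sum>i\<in>{0..<m}. ((if i = j then 1 else 0) + N $$ (j, i)) * R $$ (i, k))"
      using j k Rc Nc by (simp add: scalar_prod_def)
    also have "\<dots> = (\<Sum>i\<in>{0..<m}. (if i = j then R $$ (i, k) else 0)) + (\<Sum>i\<in>{0..<m}. N $$ (j, i) * R $$ (i, k))"
      by (subst sum.distrib[symmetric], rule sum.cong) (auto simp: distrib_right)
    also have "(\<Sum>i\<in>{0..<m}. (if i = j then R $$ (i, k) else 0)) = R $$ (j, k)" using j by simp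
    also have "(\<Sum>i\<in>{0..<m}. N $$ (j, i) * R $$ (i, k)) = (\<Sum>i\<in>{0..<j}. N $$ (j, i) * R $$ (i, k))"
      using j by (intro sum.mono_neutral_right) (auto simp: N_def)
    finally show "mat m m (\<lambda>(j, k). ip (psi p W (d - (j + 1))) (Aop p W E s d (v k))) $$ (j, k) = ((1\<^sub>m m + N) * R) $$ (j, k)"
      using Lrow[OF j k] j k by simp
  qed (use Rc Nc in auto)
  have d1: "det (1\<^sub>m m + N) = 1"
  proof -
    have "det (1\<^sub>m m + N) = prod_list (diag_mat (1\<^sub>m m + N))"
      by (rule det_lower_triangular[of m]) (use Nc in \<open>auto simp: N_def\<close>)
    also have "diag_mat (1\<^sub>m m + N) = replicate m 1"
      using Nc by (auto simp: diag_mat_def N_def intro!: nth_equalityI)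
    finally show ?thesis by (simp add: prod_list_replicate)
  qed
  show ?thesis unfolding Meq R_def[symmetric]
    using det_mult[of "1\<^sub>m m + N" m R] Rc Nc d1 by simp
qed

end



lemma expabs_int: "integrable lebesgue (\<lambda>x::real. exp (- \<bar>x\<bar>))"
proof -
  define g where "g = (\<lambda>x::real. indicator {0..} x *\<^sub>R exp (- x))"
  have "(\<lambda>x::real. exp (- 1 * x)) integrable_on {0..}"
    by (rule integrable_on_exp_minus_to_infinity) simp
  hence "(\<lambda>x::real. exp (- x)) absolutely_integrable_on {0..}"
    by (intro nonnegative_absolutely_integrable_1) auto
  hence gl: "integrable lebesgue g" unfolding g_def set_integrable_def .
  have gm: "g \<in> borel_measurable borel" unfolding g_def by measurable
  have gb: "integrable lborel g" using gl gm by (simp add: integrable_completion)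
  have gb2: "integrable lborel (\<lambda>x. g (0 + (-1) * x))"
    by (rule lborel_integrable_real_affine[OF gb]) simp
  have "integrable lborel (\<lambda>x. g x + g (0 + (-1) * x))" using gb gb2 by auto
  hence I: "integrable lebesgue (\<lambda>x. g x + g (0 + (-1) * x))"
    by (subst integrable_completion) (auto simp: g_def)
  show ?thesis
  proof (rule Bochner_Integration.integrable_bound[OF I])
    show "(\<lambda>x::real. exp (- \<bar>x\<bar>)) \<in> borel_measurable lebesgue" by (intro measurable_completion) measurable
    show "AE x in lebesgue. norm (exp (- \<bar>x\<bar>)) \<le> norm (g x + g (0 + (-1) * x))"
      by (rule AE_I2) (auto simp: g_def indicator_def)
  qed
qed


lemma W_int:
  fixes W :: "real \<Rightarrow> real" and p :: "nat \<Rightarrow> real poly"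
  assumes p_deg: "\<forall>i. degree (p i) = i \<and> lead_coeff (p i) > 0"
    and p_orth: "\<forall>i j. integrable lebesgue (\<lambda>x. poly (p i) x * poly (p j) x * W x) \<and>
                   (LINT x|lebesgue. poly (p i) x * poly (p j) x * W x) = (if i = j then 1 else 0)"
  shows "integrable lebesgue W"
proof -
  define c where "c = coeff (p 0) 0"
  have c: "c > 0" using p_deg[rule_format, of 0] by (auto simp: c_def)
  have pc: "poly (p 0) x = c" for x using p_deg[rule_format, of 0] by (simp add: poly_altdef c_def)
  have "integrable lebesgue (\<lambda>x. c * c * W x)" using p_orth[rule_format, of 0 0] by (simp add: pc)
  hence "integrable lebesgue (\<lambda>x. (1 / (c * c)) * (c * c * W x))" by (rule integrable_mult_right)
  thus ?thesis using c by simp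
qed

lemma W_meas:
  assumes "integrable lebesgue W" shows "(W::real\<Rightarrow>real) \<in> borel_measurable lebesgue"
  using assms by (rule borel_measurable_integrable)

lemma id_meas: "(\<lambda>x::real. x) \<in> borel_measurable lebesgue"
  by (intro measurable_completion) simp

lemma poly_meas: "(\<lambda>x. poly (q::real poly) x) \<in> borel_measurable lebesgue"
proof -
  have "poly q = (\<lambda>x. \<Sum>i\<le>degree q. coeff q i * x ^ i)" by (simp add: fun_eq_iff poly_altdef)
  thus ?thesis using id_meas by simp
qed

lemma psi_L2:
  fixes W :: "real \<Rightarrow> real" and p :: "nat \<Rightarrow> real poly"
  assumes W_nonneg: "\<forall>x. W x \<ge> 0" and Wm: "W \<in> borel_measurable lebesgue"
    and p_orth: "\<forall>i j. integrable lebesgue (\<lambda>x. poly (p i) x * poly (p j) x * W x) \<and>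
                   (LINT x|lebesgue. poly (p i) x * poly (p j) x * W x) = (if i = j then 1 else 0)"
  shows "psi p W i \<in> L2"
proof -
  have pm: "(\<lambda>x. poly (p i) x) \<in> borel_measurable lebesgue" by (rule poly_meas)
  have m: "psi p W i \<in> borel_measurable lebesgue" unfolding psi_def using pm Wm by measurable
  have eq: "(cmod (psi p W i x))^2 = poly (p i) x * poly (p i) x * W x" for x
    unfolding psi_def norm_of_real power2_abs using W_nonneg
    by (simp add: power_mult_distrib real_sqrt_pow2 power2_eq_square[symmetric])
  have "integrable lebesgue (\<lambda>x. (cmod (psi p W i x))^2)"
    unfolding eq using p_orth by blast
  thus ?thesis using m by (simp add: L2_def)
qed

lemma vhat_L2:
  fixes W :: "real \<Rightarrow> real"
  assumes W_nonneg: "\<forall>x. W x \<ge> 0" and Wi: "integrable lebesgue W"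
    and W_decay: "\<forall>M::real. \<forall>\<^sub>F x in at_infinity. W x \<le> exp (- M * \<bar>x\<bar>)"
  shows "vhat W a \<in> L2"
proof -
  have Wm: "W \<in> borel_measurable lebesgue" using Wi by (rule borel_measurable_integrable)
  have m: "vhat W a \<in> borel_measurable lebesgue" unfolding vhat_def using Wm id_meas
    by measurable
  obtain R where R: "\<And>x. R \<le> norm x \<Longrightarrow> W x \<le> exp (- (2 * \<bar>a\<bar> + 1) * \<bar>x\<bar>)"
    using W_decay[rule_format, of "2 * \<bar>a\<bar> + 1"] unfolding eventually_at_infinity by blast
  have eq: "(cmod (vhat W a x))^2 = exp (2 * a * x) * W x" for x
    unfolding vhat_def norm_of_real power2_abs using W_nonneg
    by (simp add: power_mult_distrib real_sqrt_pow2 exp_double[symmetric] mult.assoc)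
  have bnd: "exp (2 * a * x) * W x \<le> exp (2 * \<bar>a\<bar> * \<bar>R\<bar>) * W x + exp (- \<bar>x\<bar>)" for x
  proof (cases "R \<le> \<bar>x\<bar>")
    case True
    have "exp (2 * a * x) * W x \<le> exp (2 * a * x) * exp (- (2 * \<bar>a\<bar> + 1) * \<bar>x\<bar>)"
      using R[of x] True by (intro mult_left_mono) auto
    also have "\<dots> = exp (2 * a * x - (2 * \<bar>a\<bar> + 1) * \<bar>x\<bar>)" by (simp add: exp_add[symmetric] algebra_simps)
    also have "\<dots> \<le> exp (- \<bar>x\<bar>)"
    proof -
      have "a * x \<le> \<bar>a\<bar> * \<bar>x\<bar>" by (metis abs_ge_self abs_mult)
      thus ?thesis by (simp add: algebra_simps)
    qed
    finally show ?thesis using W_nonneg by (smt (verit) exp_ge_zero mult_nonneg_nonneg)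
  next
    case False
    have "a * x \<le> \<bar>a\<bar> * \<bar>R\<bar>"
    proof -
      have "a * x \<le> \<bar>a\<bar> * \<bar>x\<bar>" by (metis abs_ge_self abs_mult)
      also have "\<dots> \<le> \<bar>a\<bar> * \<bar>R\<bar>" using False by (intro mult_left_mono) auto
      finally show ?thesis .
    qed
    hence "exp (2 * a * x) * W x \<le> exp (2 * \<bar>a\<bar> * \<bar>R\<bar>) * W x"
      using W_nonneg by (intro mult_right_mono) auto
    thus ?thesis by (smt (verit) exp_ge_zero)
  qed
  have I: "integrable lebesgue (\<lambda>x. exp (2 * \<bar>a\<bar> * \<bar>R\<bar>) * W x + exp (- \<bar>x\<bar>))"
    using Wi expabs_int by auto
  have m2: "(\<lambda>x. (cmod (vhat W a x))^2) \<in> borel_measurable lebesgue" using m by measurable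
  have "integrable lebesgue (\<lambda>x. (cmod (vhat W a x))^2)"
  proof (rule Bochner_Integration.integrable_bound[OF I m2])
    show "AE x in lebesgue. norm ((cmod (vhat W a x))\<^sup>2) \<le> norm (exp (2 * \<bar>a\<bar> * \<bar>R\<bar>) * W x + exp (- \<bar>x\<bar>))"
    proof (rule AE_I2)
      fix x
      have "0 \<le> exp (2 * a * x) * W x" using W_nonneg by simp
      thus "norm ((cmod (vhat W a x))\<^sup>2) \<le> norm (exp (2 * \<bar>a\<bar> * \<bar>R\<bar>) * W x + exp (- \<bar>x\<bar>))"
        using bnd[of x] W_nonneg[rule_format, of x] unfolding eq by simp
    qed
  qed
  thus ?thesis using m by (simp add: L2_def)
qed



theorem lemma8p3:
  fixes W :: "real \<Rightarrow> real" and p :: "nat \<Rightarrow> real poly"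
    and d m :: nat and a :: "nat \<Rightarrow> real" and E :: "real set" and s :: complex
  assumes W_nonneg: "\<forall>x. W x \<ge> 0"
    and W_decay: "\<forall>M::real. \<forall>\<^sub>F x in at_infinity. W x \<le> exp (- M * \<bar>x\<bar>)"
    and p_deg: "\<forall>i. degree (p i) = i \<and> lead_coeff (p i) > 0"
    and p_orth: "\<forall>i j. integrable lebesgue (\<lambda>x. poly (p i) x * poly (p j) x * W x) \<and>
                   (LINT x|lebesgue. poly (p i) x * poly (p j) x * W x) = (if i = j then 1 else 0)"
    and dm: "d \<ge> m" "m \<ge> 1"
    and E_meas: "E \<in> sets lebesgue"
    and inv: "\<forall>k\<in>{d - m + 1..d}. L2_invertible (Top p W E s k)"
  shows "det (mat m m (\<lambda>(j, k). ip (psi p W (d - (j + 1)))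
                               (Aop p W E s d (vhat W (a (k + 1))))))
       = det (mat m m (\<lambda>(j, k). ip (psi p W (d - (j + 1)))
                               (Aop p W E s (d - (j + 1) + 1) (vhat W (a (k + 1))))))"
proof -
  have Wi: "integrable lebesgue W" by (rule W_int[OF p_deg p_orth])
  have Wm: "W \<in> borel_measurable lebesgue" using Wi by (rule borel_measurable_integrable)
  interpret ctx p W E s
    by unfold_locales (auto intro: psi_L2[OF W_nonneg Wm p_orth] E_meas)
  have vL2: "\<And>k. vhat W (a (k + 1)) \<in> L2" by (rule vhat_L2[OF W_nonneg Wi W_decay])
  show ?thesis
    using main_det[OF dm(1) inv, of "\<lambda>k. vhat W (a (k + 1))"] vL2 by simp
qed

end
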